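(* Let $F:\mathbb{R}^n\to\mathbb{R}^n$ and $\phi:\mathbb{R}^n\to\mathbb{R}$ be smooth, let $p\ge1$, $d>0$, and $\Omega_d=\{x\in\mathbb{R}^n:|x|<d\}$. Let $\delta_0,\delta_1,\dots,\delta_p\ge0$ satisfy $$\mathcal{L}_F^p\phi(z)\le\sum_{i=0}^{p-1}\delta_i\mathcal{L}_F^i\phi(z)+\delta_p\quad\text{for all }z\in\Omega_d.$$ For $\xi_0\in\Omega_d$ let $\xi(t;\xi_0)$ denote the solution of $\dot\xi=F(\xi)$ with $\xi(0)=\xi_0$, and let $\tau_{\xi_0}=\sup\{\tau>0:\xi(t;\xi_0)\in\Omega_d\ \forall t\in[0,\tau)\}$. Let $A$ be the $(p+1)\times(p+1)$ matrix whose rows $1,\dots,p-1$ are $e_2^\top,\dots,e_p^\top$ (i.e. $A_{k,k+1}=1$ for $k=1,\dots,p-1$, other entries of these rows zero), whose $p$-th row is $(\delta_0,\delta_1,\dots,\delta_{p-1},1)$, and whose last row is zero. Let $\psi(y,t)=e^{At}y$ be the solution of $\dot\psi=A\psi$ with initial condition $y$, and $\psi_1(y,t)$ its first component. Define $y(\xi_0)=\big(\phi(\xi_0),\mathcal{L}_F\phi(\xi_0),\dots,\mathcal{L}_F^{p-1}\phi(\xi_0),\delta_p\big)^\top$. Then for all $\xi_0\in\Omega_d$, $$\phi(\xi(t;\xi_0))\le\psi_1(y(\xi_0),t)\quad\text{for all }t\in[0,\tau_{\xi_0}).$$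
   Context: $\mathcal{L}_F\phi$ denotes the Lie derivative of $\phi$ along $F$, $\mathcal{L}_F^k\phi=\mathcal{L}_F(\mathcal{L}_F^{k-1}\phi)$, $\mathcal{L}_F^0\phi=\phi$. $|\cdot|$ is the Euclidean norm. *)

theory Defs
  imports "HOL-Analysis.Analysis"
begin

fun hdir :: "('a::real_normed_vector \<Rightarrow> 'b::real_normed_vector) \<Rightarrow> 'a list \<Rightarrow> 'a \<Rightarrow> 'b" where
  "hdir f [] = f"
| "hdir f (v # vs) = (\<lambda>x. frechet_derivative (hdir f vs) (at x) v)"

(* C^\<infinity> on the whole space: all iterated derivatives exist (and are hence continuous) everywhere *)
definition smooth :: "('a::real_normed_vector \<Rightarrow> 'b::real_normed_vector) \<Rightarrow> bool" where
  "smooth f \<longleftrightarrow> (\<forall>vs x. hdir f vs differentiable (at x))"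

definition lie_deriv :: "('a::real_normed_vector \<Rightarrow> 'a) \<Rightarrow> ('a \<Rightarrow> real) \<Rightarrow> 'a \<Rightarrow> real" where
  "lie_deriv F \<phi> = (\<lambda>x. frechet_derivative \<phi> (at x) (F x))"

definition lie_pow :: "('a::real_normed_vector \<Rightarrow> 'a) \<Rightarrow> nat \<Rightarrow> ('a \<Rightarrow> real) \<Rightarrow> 'a \<Rightarrow> real" where
  "lie_pow F k \<phi> = (lie_deriv F ^^ k) \<phi>"

(* Square matrices of size (p+1) with indices 0..p, vectors indexed 0..p *)
definition mat_vec :: "nat \<Rightarrow> (nat \<Rightarrow> nat \<Rightarrow> real) \<Rightarrow> (nat \<Rightarrow> real) \<Rightarrow> nat \<Rightarrow> real" where
  "mat_vec p M y = (\<lambda>i. if i \<le> p then (\<Sum>j\<le>p. M i j * y j) else 0)"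

definition mat_exp_apply :: "nat \<Rightarrow> (nat \<Rightarrow> nat \<Rightarrow> real) \<Rightarrow> real \<Rightarrow> (nat \<Rightarrow> real) \<Rightarrow> nat \<Rightarrow> real" where
  "mat_exp_apply p M t y = (\<lambda>i. \<Sum>k. t ^ k / fact k * ((mat_vec p M ^^ k) y) i)"

(* The matrix A (0-based indices 0..p): rows 0..p-2 are shift rows e_{i+1}^T,
   row p-1 is (\<delta>_0,...,\<delta>_{p-1},1), row p is zero. *)
definition matA :: "nat \<Rightarrow> (nat \<Rightarrow> real) \<Rightarrow> nat \<Rightarrow> nat \<Rightarrow> real" where
  "matA p \<delta> = (\<lambda>i j.
     if i + 1 < p then (if j = i + 1 then 1 else 0)
     else if i + 1 = p then (if j < p then \<delta> j else if j = p then 1 else 0)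
     else 0)"

definition psi1 :: "nat \<Rightarrow> (nat \<Rightarrow> real) \<Rightarrow> (nat \<Rightarrow> real) \<Rightarrow> real \<Rightarrow> real" where
  "psi1 p \<delta> y t = mat_exp_apply p (matA p \<delta>) t y 0"

definition yvec :: "nat \<Rightarrow> (nat \<Rightarrow> real) \<Rightarrow> ('a::real_normed_vector \<Rightarrow> 'a) \<Rightarrow> ('a \<Rightarrow> real) \<Rightarrow> 'a \<Rightarrow> nat \<Rightarrow> real" where
  "yvec p \<delta> F \<phi> x0 = (\<lambda>i. if i < p then lie_pow F i \<phi> x0 else if i = p then \<delta> p else 0)"

end

theory Submission
  imports Defs
begin


lemma hdir_app: "hdir (hdir f [v]) vs = hdir f (vs @ [v])"
  by (induction vs) auto

lemma smooth_hdir1: "smooth f \<Longrightarrow> smooth (hdir f [v])"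
  unfolding smooth_def by (simp only: hdir_app) blast

lemma smooth_diff: "smooth f \<Longrightarrow> f differentiable (at x)"
  unfolding smooth_def by (metis hdir.simps(1))

lemma hdir_inner: 
  assumes "smooth F"
  shows "hdir (\<lambda>x. F x \<bullet> b) vs = (\<lambda>x. hdir F vs x \<bullet> b)"
proof (induction vs)
  case Nil then show ?case by simp
next
  case (Cons w vs)
  show ?case
  proof
    fix x
    have "hdir F vs differentiable (at x)" using assms unfolding smooth_def by blast
    then have d: "(hdir F vs has_derivative frechet_derivative (hdir F vs) (at x)) (at x)"
      using frechet_derivative_works by blast
    have "((\<lambda>x. hdir F vs x \<bullet> b) has_derivative (\<lambda>h. frechet_derivative (hdir F vs) (at x) h \<bullet> b)) (at x)"
      by (rule derivative_eq_intros d)+ simp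
    then have "frechet_derivative (\<lambda>x. hdir F vs x \<bullet> b) (at x) = (\<lambda>h. frechet_derivative (hdir F vs) (at x) h \<bullet> b)"
      using frechet_derivative_at by metis
    then show "hdir (\<lambda>x. F x \<bullet> b) (w # vs) x = hdir F (w # vs) x \<bullet> b"
      using Cons by simp
  qed
qed

lemma smooth_inner: assumes "smooth F" shows "smooth (\<lambda>x. F x \<bullet> b)"
  unfolding smooth_def hdir_inner[OF assms]
proof (intro allI)
  fix vs x
  have "hdir F vs differentiable (at x)" using assms unfolding smooth_def by blast
  then show "(\<lambda>x. hdir F vs x \<bullet> b) differentiable (at x)"
    using differentiable_compose[of "\<lambda>y. y \<bullet> b" "hdir F vs" x]
    by (auto simp: o_def intro: bounded_linear_imp_differentiable bounded_linear_inner_left)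
qed

inductive PS :: "('a::real_normed_vector \<Rightarrow> real) \<Rightarrow> bool" where
  zero: "PS (\<lambda>x. 0)"
| prod: "smooth f \<Longrightarrow> smooth g \<Longrightarrow> PS (\<lambda>x. f x * g x)"
| add: "PS f \<Longrightarrow> PS g \<Longrightarrow> PS (\<lambda>x. f x + g x)"

lemma PS_step: "PS h \<Longrightarrow> (\<forall>x. h differentiable (at x)) \<and> (\<forall>w. PS (hdir h [w]))"
proof (induction rule: PS.induct)
  case zero
  have "frechet_derivative (\<lambda>x. 0::real) (at x) = (\<lambda>h. 0)" for x :: 'a
    using frechet_derivative_at[OF has_derivative_const] by metis
  then show ?case by (simp add: PS.zero)
next
  case (prod f g)
  have df: "f differentiable (at x)" and dg: "g differentiable (at x)" for x
    using prod smooth_diff by blast+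
  have eq: "hdir (\<lambda>x. f x * g x) [w] = (\<lambda>x. (\<lambda>x. f x * hdir g [w] x) x + (\<lambda>x. hdir f [w] x * g x) x)" for w
  proof
    fix x
    have "((\<lambda>x. f x * g x) has_derivative (\<lambda>h. f x * frechet_derivative g (at x) h + frechet_derivative f (at x) h * g x)) (at x)"
      using has_derivative_mult[OF frechet_derivative_works[THEN iffD1, OF df] frechet_derivative_works[THEN iffD1, OF dg]] .
    from frechet_derivative_at[OF this] show "hdir (\<lambda>x. f x * g x) [w] x = (\<lambda>x. (\<lambda>x. f x * hdir g [w] x) x + (\<lambda>x. hdir f [w] x * g x) x) x"
      by simp metis
  qed
  show ?case
  proof (intro conjI allI)
    fix x show "(\<lambda>x. f x * g x) differentiable (at x)" using df dg by (intro differentiable_mult)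
  next
    fix w show "PS (hdir (\<lambda>x. f x * g x) [w])"
      unfolding eq by (intro PS.add PS.prod smooth_hdir1 prod.hyps)
  qed
next
  case (add f g)
  have df: "f differentiable (at x)" and dg: "g differentiable (at x)" for x
    using add by blast+
  have eq: "hdir (\<lambda>x. f x + g x) [w] = (\<lambda>x. hdir f [w] x + hdir g [w] x)" for w
  proof
    fix x
    have "((\<lambda>x. f x + g x) has_derivative (\<lambda>h. frechet_derivative f (at x) h + frechet_derivative g (at x) h)) (at x)"
      using has_derivative_add[OF frechet_derivative_works[THEN iffD1, OF df] frechet_derivative_works[THEN iffD1, OF dg]] .
    from frechet_derivative_at[OF this] show "hdir (\<lambda>x. f x + g x) [w] x = hdir f [w] x + hdir g [w] x"
      by simp metis
  qed
  show ?case
  proof (intro conjI allI)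
    fix x show "(\<lambda>x. f x + g x) differentiable (at x)" using df dg by (intro differentiable_add)
  next
    fix w show "PS (hdir (\<lambda>x. f x + g x) [w])"
      unfolding eq using add by (intro PS.add) auto
  qed
qed

lemma PS_smooth: assumes "PS h" shows "smooth h"
proof -
  have "PS (hdir h vs)" for vs
  proof (induction vs)
    case Nil then show ?case using assms by simp
  next
    case (Cons w vs)
    have "hdir h (w # vs) = hdir (hdir h vs) [w]" by simp
    then show ?case using PS_step[OF Cons] by simp
  qed
  then show ?thesis unfolding smooth_def using PS_step by blast
qed

lemma PS_sum: "finite A \<Longrightarrow> (\<And>a. a \<in> A \<Longrightarrow> PS (f a)) \<Longrightarrow> PS (\<lambda>x. \<Sum>a\<in>A. f a x)"
proof (induction A rule: finite_induct)
  case empty then show ?case by (simp add: PS.zero)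
next
  case (insert a A)
  then show ?case using PS.add[of "f a" "\<lambda>x. \<Sum>a\<in>A. f a x"] by simp
qed

lemma lie_deriv_sum:
  fixes F :: "'a::euclidean_space \<Rightarrow> 'a" and g :: "'a \<Rightarrow> real"
  assumes "smooth g"
  shows "lie_deriv F g = (\<lambda>x. \<Sum>b\<in>Basis. (F x \<bullet> b) * hdir g [b] x)"
proof
  fix x
  have "g differentiable (at x)" using assms smooth_diff by blast
  then have "linear (frechet_derivative g (at x))"
    using frechet_derivative_works has_derivative_linear by blast
  then have "frechet_derivative g (at x) (\<Sum>b\<in>Basis. (F x \<bullet> b) *\<^sub>R b) = (\<Sum>b\<in>Basis. (F x \<bullet> b) * frechet_derivative g (at x) b)"
    by (simp add: linear_sum linear_scale)
  then show "lie_deriv F g x = (\<Sum>b\<in>Basis. (F x \<bullet> b) * hdir g [b] x)"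
    unfolding lie_deriv_def by (simp add: euclidean_representation)
qed

lemma smooth_lie_deriv:
  fixes F :: "'a::euclidean_space \<Rightarrow> 'a" and g :: "'a \<Rightarrow> real"
  assumes "smooth F" "smooth g"
  shows "smooth (lie_deriv F g)"
  unfolding lie_deriv_sum[OF assms(2)]
  by (intro PS_smooth PS_sum PS.prod smooth_inner smooth_hdir1 assms) auto

lemma smooth_lie_pow:
  fixes F :: "'a::euclidean_space \<Rightarrow> 'a" and g :: "'a \<Rightarrow> real"
  assumes "smooth F" "smooth g"
  shows "smooth (lie_pow F k g)"
  unfolding lie_pow_def
  by (induction k) (auto intro: smooth_lie_deriv assms)



fun Rr :: "nat \<Rightarrow> (nat \<Rightarrow> nat \<Rightarrow> real) \<Rightarrow> nat \<Rightarrow> nat \<Rightarrow> real" where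
  "Rr p M 0 j = (if j = 0 then 1 else 0)"
| "Rr p M (Suc k) j = (\<Sum>i\<le>p. Rr p M k i * M i j)"

lemma mat_pow0: "((mat_vec p M ^^ k) y) 0 = (\<Sum>j\<le>p. Rr p M k j * y j)"
proof (induction k arbitrary: y)
  case 0
  have "(\<Sum>j\<le>p. (if j = 0 then 1 else 0) * y j) = (\<Sum>j\<le>p. if j = 0 then y j else 0)"
    by (rule sum.cong) auto
  also have "\<dots> = y 0" by (subst sum.delta) auto
  finally show ?case by simp
next
  case (Suc k)
  have "((mat_vec p M ^^ Suc k) y) 0 = ((mat_vec p M ^^ k) (mat_vec p M y)) 0"
    by (simp only: funpow_Suc_right comp_apply)
  also have "\<dots> = (\<Sum>j\<le>p. Rr p M k j * (\<Sum>i\<le>p. M j i * y i))"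
    unfolding Suc by (rule sum.cong) (auto simp: mat_vec_def)
  also have "\<dots> = (\<Sum>i\<le>p. (\<Sum>j\<le>p. Rr p M k j * M j i) * y i)"
    unfolding sum_distrib_left sum_distrib_right
    by (subst sum.swap) (simp add: mult_ac)
  finally show ?case by simp
qed

definition NN :: "nat \<Rightarrow> (nat \<Rightarrow> nat \<Rightarrow> real) \<Rightarrow> real \<Rightarrow> bool" where
  "NN p M K \<longleftrightarrow> (\<forall>i j. i \<le> p \<longrightarrow> j \<le> p \<longrightarrow> 0 \<le> M i j \<and> M i j \<le> K)"

lemma Rr_nonneg: "NN p M K \<Longrightarrow> j \<le> p \<Longrightarrow> 0 \<le> Rr p M k j"
  by (induction k arbitrary: j) (auto simp: NN_def intro!: sum_nonneg)

lemma Rr_sum_bound: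
  assumes "NN p M K"
  shows "(\<Sum>j\<le>p. Rr p M k j) \<le> (real (Suc p) * K) ^ k"
proof (induction k)
  case 0 then show ?case by simp
next
  case (Suc k)
  have "(\<Sum>j\<le>p. Rr p M (Suc k) j) = (\<Sum>j\<le>p. \<Sum>i\<le>p. Rr p M k i * M i j)" by simp
  also have "\<dots> \<le> (\<Sum>j\<le>p. \<Sum>i\<le>p. Rr p M k i * K)"
    using assms by (intro sum_mono mult_left_mono Rr_nonneg) (auto simp: NN_def)
  also have "\<dots> = real (Suc p) * K * (\<Sum>j\<le>p. Rr p M k j)"
  proof -
    have "(\<Sum>i\<le>p. Rr p M k i * K) = K * (\<Sum>j\<le>p. Rr p M k j)"
      by (simp add: sum_distrib_left mult.commute)
    then show ?thesis by simp
  qed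
  also have "\<dots> \<le> real (Suc p) * K * (real (Suc p) * K) ^ k"
  proof -
    have "0 \<le> K" using assms unfolding NN_def by (metis le0 order_trans)
    then show ?thesis using Suc by (intro mult_left_mono) auto
  qed
  finally show ?case by simp
qed

lemma Rr_bound:
  assumes "NN p M K" "j \<le> p"
  shows "Rr p M k j \<le> (real (Suc p) * K) ^ k"
proof -
  have "Rr p M k j \<le> (\<Sum>j\<le>p. Rr p M k j)"
    using assms by (intro member_le_sum Rr_nonneg) auto
  then show ?thesis using order_trans[OF _ Rr_sum_bound[OF assms(1), of k]] by blast
qed

definition mm :: "nat \<Rightarrow> (nat \<Rightarrow> nat \<Rightarrow> real) \<Rightarrow> nat \<Rightarrow> real \<Rightarrow> real" where
  "mm p M j t = (\<Sum>k. Rr p M k j / fact k * t ^ k)"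

lemma mm_summable:
  assumes "NN p M K" "j \<le> p"
  shows "summable (\<lambda>k. Rr p M k j / fact k * t ^ k)"
proof (rule summable_comparison_test)
  let ?B = "real (Suc p) * K"
  show "summable (\<lambda>k. inverse (fact k) * (?B * \<bar>t\<bar>) ^ k)" by (rule summable_exp)
  have "norm (Rr p M k j / fact k * t ^ k) \<le> inverse (fact k) * (?B * \<bar>t\<bar>) ^ k" for k
  proof -
    have "norm (Rr p M k j / fact k * t ^ k) = Rr p M k j * \<bar>t\<bar> ^ k / fact k"
      using Rr_nonneg[OF assms] by (simp add: abs_mult power_abs)
    also have "\<dots> \<le> ?B ^ k * \<bar>t\<bar> ^ k / fact k"
      using Rr_bound[OF assms] by (intro divide_right_mono mult_right_mono) auto
    also have "\<dots> = inverse (fact k) * (?B * \<bar>t\<bar>) ^ k"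
      by (simp add: power_mult_distrib divide_inverse mult_ac)
    finally show ?thesis .
  qed
  then show "\<exists>N. \<forall>n\<ge>N. norm (Rr p M n j / fact n * t ^ n) \<le> inverse (fact n) * (?B * \<bar>t\<bar>) ^ n"
    by blast
qed

lemma mm_nonneg:
  assumes "NN p M K" "j \<le> p" "0 \<le> t"
  shows "0 \<le> mm p M j t"
  unfolding mm_def using assms Rr_nonneg[OF assms(1,2)]
  by (intro suminf_nonneg mm_summable) auto

lemma mm_zero: "mm p M j 0 = (if j = 0 then 1 else 0)"
  unfolding mm_def using powser_zero[of "\<lambda>k. Rr p M k j / fact k"] by simp

lemma mm_mult:
  assumes "NN p M K" "j \<le> p"
  shows "(\<Sum>k. c * (Rr p M k j / fact k * t ^ k)) = c * mm p M j t"
  unfolding mm_def by (rule suminf_mult, rule mm_summable[OF assms])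

lemma mat_exp0:
  assumes "NN p M K"
  shows "mat_exp_apply p M t y 0 = (\<Sum>j\<le>p. y j * mm p M j t)"
proof -
  have "mat_exp_apply p M t y 0 = (\<Sum>k. \<Sum>j\<le>p. y j * (Rr p M k j / fact k * t ^ k))"
    unfolding mat_exp_apply_def mat_pow0
    by (intro suminf_cong) (simp add: sum_distrib_left divide_inverse mult_ac)
  also have "\<dots> = (\<Sum>j\<le>p. \<Sum>k. y j * (Rr p M k j / fact k * t ^ k))"
    using assms by (intro suminf_sum summable_mult mm_summable) auto
  also have "\<dots> = (\<Sum>j\<le>p. y j * mm p M j t)"
    using assms by (intro sum.cong refl mm_mult) auto
  finally show ?thesis .
qed

lemma mm_deriv:
  assumes "NN p M K" "j \<le> p"
  shows "(mm p M j has_field_derivative (\<Sum>i\<le>p. M i j * mm p M i t)) (at t)"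
proof -
  let ?c = "\<lambda>k. Rr p M k j / fact k"
  have "((\<lambda>x. \<Sum>n. ?c n * x ^ n) has_field_derivative (\<Sum>n. diffs ?c n * t ^ n)) (at t)"
    by (rule termdiffs_strong_converges_everywhere) (rule mm_summable[OF assms])
  moreover have "(\<lambda>x. \<Sum>n. ?c n * x ^ n) = mm p M j" by (simp add: mm_def fun_eq_iff)
  moreover have "(\<Sum>n. diffs ?c n * t ^ n) = (\<Sum>i\<le>p. M i j * mm p M i t)"
  proof -
    have "diffs ?c n * t ^ n = (\<Sum>i\<le>p. M i j * (Rr p M n i / fact n * t ^ n))" for n
    proof -
      have "diffs ?c n = Rr p M (Suc n) j / fact n"
        unfolding diffs_def by (simp only: fact_Suc) (simp del: Rr.simps of_nat_Suc)
      then show ?thesis by (simp add: sum_divide_distrib sum_distrib_right sum_distrib_left mult_ac)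
    qed
    then have "(\<Sum>n. diffs ?c n * t ^ n) = (\<Sum>n. \<Sum>i\<le>p. M i j * (Rr p M n i / fact n * t ^ n))"
      by simp
    also have "\<dots> = (\<Sum>i\<le>p. \<Sum>n. M i j * (Rr p M n i / fact n * t ^ n))"
      using assms by (intro suminf_sum summable_mult mm_summable) auto
    also have "\<dots> = (\<Sum>i\<le>p. M i j * mm p M i t)"
      using assms by (intro sum.cong refl mm_mult) auto
    finally show ?thesis .
  qed
  ultimately show ?thesis by simp
qed



lemma lie_pow_0: "lie_pow F 0 g = g" by (simp add: lie_pow_def)
lemma lie_pow_Suc: "lie_pow F (Suc k) g = lie_deriv F (lie_pow F k g)" by (simp add: lie_pow_def)

lemma NN_matA:
  assumes "\<forall>i\<le>p. \<delta> i \<ge> 0"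
  shows "NN p (matA p \<delta>) (1 + (\<Sum>j\<le>p. \<delta> j))"
proof -
  define K where "K = 1 + (\<Sum>j\<le>p. \<delta> j)"
  have s0: "0 \<le> (\<Sum>j\<le>p. \<delta> j)" using assms by (intro sum_nonneg) auto
  have "\<delta> j \<le> (\<Sum>j\<le>p. \<delta> j)" if "j \<le> p" for j
    using assms that by (intro member_le_sum) auto
  then have "\<delta> j \<le> K" if "j \<le> p" for j using that unfolding K_def by fastforce
  moreover have "1 \<le> K" "0 \<le> K" using s0 unfolding K_def by auto
  ultimately
  have "NN p (matA p \<delta>) K" using assms unfolding NN_def matA_def by auto
  then show ?thesis unfolding K_def .
qed

lemma key_ineq:
  assumes "i \<le> p" "p \<ge> 1"
    and hyp: "lie_pow F p \<phi> z \<le> (\<Sum>i<p. \<delta> i * lie_pow F i \<phi> z) + \<delta> p"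
  shows "(if i < p then lie_pow F (Suc i) \<phi> z else 0) \<le> (\<Sum>j\<le>p. matA p \<delta> i j * yvec p \<delta> F \<phi> z j)"
proof -
  consider "i + 1 < p" | "i + 1 = p" | "i = p" using assms by linarith
  then show ?thesis
  proof cases
    case 1
    have "(\<Sum>j\<le>p. matA p \<delta> i j * yvec p \<delta> F \<phi> z j) = (\<Sum>j\<le>p. if j = i + 1 then yvec p \<delta> F \<phi> z j else 0)"
      using 1 by (intro sum.cong) (auto simp: matA_def)
    also have "\<dots> = yvec p \<delta> F \<phi> z (i + 1)" using 1 by (subst sum.delta) auto
    finally show ?thesis using 1 by (simp add: yvec_def)
  next
    case 2
    have "(\<Sum>j\<le>p. matA p \<delta> i j * yvec p \<delta> F \<phi> z j) = (\<Sum>j\<in>insert p {..<p}. matA p \<delta> i j * yvec p \<delta> F \<phi> z j)"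
      by (intro sum.cong) auto
    also have "\<dots> = \<delta> p + (\<Sum>j<p. \<delta> j * lie_pow F j \<phi> z)"
      using 2 by (subst sum.insert) (auto simp: matA_def yvec_def)
    finally show ?thesis using 2 hyp by simp
  next
    case 3
    then show ?thesis by (simp add: matA_def)
  qed
qed

theorem lemma2:
  fixes F :: "'a::euclidean_space \<Rightarrow> 'a" and \<phi> :: "'a \<Rightarrow> real"
    and p :: nat and d :: real and \<delta> :: "nat \<Rightarrow> real"
  assumes "smooth F" and "smooth \<phi>"
    and "p \<ge> 1" and "d > 0"
    and "\<forall>i\<le>p. \<delta> i \<ge> 0"
    and "\<forall>z\<in>ball 0 d. lie_pow F p \<phi> z \<le> (\<Sum>i<p. \<delta> i * lie_pow F i \<phi> z) + \<delta> p"
  shows "\<forall>\<xi>0\<in>ball 0 d. \<forall>T>0. \<forall>\<xi> :: real \<Rightarrow> 'a.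
           (\<xi> 0 = \<xi>0 \<and> (\<forall>t\<in>{0..<T}. (\<xi> has_vector_derivative F (\<xi> t)) (at t within {0..<T}))
            \<and> (\<forall>t\<in>{0..<T}. \<xi> t \<in> ball 0 d))
           \<longrightarrow> (\<forall>t\<in>{0..<T}. \<phi> (\<xi> t) \<le> psi1 p \<delta> (yvec p \<delta> F \<phi> \<xi>0) t)"
proof (intro ballI allI impI)
  fix \<xi>0 :: 'a and T :: real and \<xi> :: "real \<Rightarrow> 'a" and t :: real
  assume "\<xi>0 \<in> ball 0 d" "T > 0"
  assume H: "\<xi> 0 = \<xi>0 \<and> (\<forall>t\<in>{0..<T}. (\<xi> has_vector_derivative F (\<xi> t)) (at t within {0..<T}))
            \<and> (\<forall>t\<in>{0..<T}. \<xi> t \<in> ball 0 d)"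
  assume t: "t \<in> {0..<T}"
  define S where "S = {0..<T::real}"
  define A where "A = matA p \<delta>"
  define K where "K = 1 + (\<Sum>j\<le>p. \<delta> j)"
  have NNA: "NN p A K" unfolding A_def K_def using NN_matA assms(5) .
  define u where "u j s = yvec p \<delta> F \<phi> (\<xi> s) j" for j s
  define v where "v j s = (if j < p then lie_pow F (Suc j) \<phi> (\<xi> s) else 0)" for j s
  have Dxi: "(\<xi> has_vector_derivative F (\<xi> s)) (at s within S)" if "s \<in> S" for s
    using H that unfolding S_def by blast
  have Du: "((\<lambda>s. u j s) has_field_derivative v j s) (at s within S)" if "s \<in> S" for j s
  proof (cases "j < p")
    case True
    let ?g = "lie_pow F j \<phi>"
    have "?g differentiable (at (\<xi> s))"
      using smooth_diff smooth_lie_pow assms(1,2) by blast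
    then have dg: "(?g has_derivative frechet_derivative ?g (at (\<xi> s))) (at (\<xi> s) within \<xi> ` S)"
      using frechet_derivative_works has_derivative_at_withinI by blast
    have "((?g \<circ> \<xi>) has_vector_derivative frechet_derivative ?g (at (\<xi> s)) (F (\<xi> s))) (at s within S)"
      by (rule vector_derivative_diff_chain_within[OF Dxi[OF that] dg])
    moreover have "frechet_derivative ?g (at (\<xi> s)) (F (\<xi> s)) = v j s"
      using True by (simp add: v_def lie_pow_Suc lie_deriv_def)
    moreover have "(?g \<circ> \<xi>) = (\<lambda>s. u j s)" using True by (auto simp: u_def yvec_def)
    ultimately show ?thesis by (simp add: has_real_derivative_iff_has_vector_derivative)
  next
    case False
    have "(\<lambda>s. u j s) = (\<lambda>s. if j = p then \<delta> p else 0)" using False by (auto simp: u_def yvec_def)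
    then show ?thesis using False by (simp add: v_def)
  qed
  define m' where "m' j r = (\<Sum>i\<le>p. A i j * mm p A i r)" for j r
  define W where "W s = (\<Sum>j\<le>p. mm p A j (t - s) * u j s)" for s
  define W' where "W' s = (\<Sum>j\<le>p. mm p A j (t - s) * v j s + m' j (t - s) * (-1) * u j s)" for s
  have DW: "(W has_field_derivative W' s) (at s within S)" if "s \<in> S" for s
  proof -
    have "((\<lambda>s. mm p A j (t - s)) has_field_derivative m' j (t - s) * (-1)) (at s within S)" if "j \<le> p" for j
      by (rule DERIV_chain2[OF mm_deriv[OF NNA that, unfolded m'_def[symmetric]]])
         (auto intro!: derivative_eq_intros)
    then have "((\<lambda>s. \<Sum>j\<le>p. mm p A j (t - s) * u j s) has_field_derivative W' s) (at s within S)"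
      unfolding W'_def by (intro DERIV_sum DERIV_mult' Du that) auto
    moreover have "W = (\<lambda>s. \<Sum>j\<le>p. mm p A j (t - s) * u j s)" by (simp add: W_def fun_eq_iff)
    ultimately show ?thesis by simp
  qed
  have W'_eq: "W' s = (\<Sum>i\<le>p. mm p A i (t - s) * (v i s - (\<Sum>j\<le>p. A i j * u j s)))" for s
  proof -
    have "(\<Sum>j\<le>p. m' j (t - s) * u j s) = (\<Sum>j\<le>p. \<Sum>i\<le>p. mm p A i (t - s) * (A i j * u j s))"
      unfolding m'_def sum_distrib_right by (intro sum.cong refl) (simp add: mult_ac)
    also have "\<dots> = (\<Sum>i\<le>p. mm p A i (t - s) * (\<Sum>j\<le>p. A i j * u j s))"
      by (subst sum.swap) (simp add: sum_distrib_left)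
    finally have X: "(\<Sum>j\<le>p. m' j (t - s) * u j s) = (\<Sum>i\<le>p. mm p A i (t - s) * (\<Sum>j\<le>p. A i j * u j s))" .
    have "W' s = (\<Sum>j\<le>p. mm p A j (t - s) * v j s) - (\<Sum>j\<le>p. m' j (t - s) * u j s)"
      unfolding W'_def sum_subtractf[symmetric] by (intro sum.cong refl) simp
    also have "\<dots> = (\<Sum>i\<le>p. mm p A i (t - s) * v i s) - (\<Sum>i\<le>p. mm p A i (t - s) * (\<Sum>j\<le>p. A i j * u j s))"
      unfolding X ..
    also have "\<dots> = (\<Sum>i\<le>p. mm p A i (t - s) * (v i s - (\<Sum>j\<le>p. A i j * u j s)))"
      by (simp add: right_diff_distrib sum_subtractf)
    finally show ?thesis .
  qed
  have W'_nonpos: "W' s \<le> 0" if "0 \<le> s" "s \<le> t" for s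
  proof -
    have sS: "\<xi> s \<in> ball 0 d" using H that t by auto
    have "mm p A i (t - s) * (v i s - (\<Sum>j\<le>p. A i j * u j s)) \<le> 0" if "i \<le> p" for i
    proof (rule mult_nonneg_nonpos)
      show "0 \<le> mm p A i (t - s)" using mm_nonneg[OF NNA that] \<open>s \<le> t\<close> by simp
      show "v i s - (\<Sum>j\<le>p. A i j * u j s) \<le> 0"
        using key_ineq[OF that assms(3), of F \<phi> "\<xi> s" \<delta>] assms(6) sS
        unfolding v_def u_def A_def by simp
    qed
    then show ?thesis unfolding W'_eq by (intro sum_nonpos) auto
  qed
  have cont: "continuous_on {0..t} W"
  proof -
    have "continuous_on S W"
      unfolding continuous_on_eq_continuous_within using DW DERIV_continuous by blast
    then show ?thesis by (rule continuous_on_subset) (use t in \<open>auto simp: S_def\<close>)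
  qed
  have "W 0 \<ge> W t"
  proof (rule DERIV_nonpos_imp_decreasing_open[OF _ _ cont])
    show "0 \<le> t" using t by simp
    fix x assume x: "0 < x" "x < t"
    then have "x \<in> interior S" using t by (auto simp: S_def)
    then have e: "at x within S = at x" by (rule at_within_interior)
    have "x \<in> S" using x t by (auto simp: S_def)
    from DW[OF this] have "(W has_field_derivative W' x) (at x)" unfolding e .
    then show "\<exists>y. (W has_field_derivative y) (at x) \<and> y \<le> 0" using W'_nonpos x by auto
  qed
  moreover have "W t = \<phi> (\<xi> t)"
  proof -
    have "W t = (\<Sum>j\<le>p. if j = 0 then u j t else 0)"
      unfolding W_def by (intro sum.cong) (auto simp: mm_zero)
    also have "\<dots> = u 0 t" by (subst sum.delta) auto
    finally show ?thesis using assms(3) by (simp add: u_def yvec_def lie_pow_0)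
  qed
  moreover have "W 0 = psi1 p \<delta> (yvec p \<delta> F \<phi> \<xi>0) t"
    unfolding psi1_def mat_exp0[OF NNA[unfolded A_def]] W_def u_def A_def
    using H by (intro sum.cong refl) (simp add: mult.commute)
  ultimately show "\<phi> (\<xi> t) \<le> psi1 p \<delta> (yvec p \<delta> F \<phi> \<xi>0) t" by simp
qed

end
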